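(* Let $x \in \mathcal{O}_s \cup \mathcal{O}_t$ with $x \neq 1$, and let $\lambda = \left(x^{q-1} + x^{-(q-1)}\right)^{q-1}$. Then $$x^{q+1} + \sqrt{(\lambda^{\sqrt{2q}}+1)\lambda}\; x + \lambda^{\sqrt{2q}/2} = 0,$$ where $\sqrt{y}$ denotes the unique square root of $y$ in $E$.
   Context: Let $q = 2^m$ with $m \ge 3$ odd, so that $\sqrt{2q} = 2^{(m+1)/2}$ is an integer and $\sqrt{2q}/2 = 2^{(m-1)/2}$. Let $E = \mathbb{F}_{q^4}$. Put $s = q - \sqrt{2q} + 1$ and $t = q + \sqrt{2q} + 1$. Define $\mathcal{O}_s = \{x \in E \mid x^s = 1\}$ and $\mathcal{O}_t = \{x \in E \mid x^t = 1\}$. *)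

theory Defs
  imports Main
begin

text \<open>The square root of an element of a field: the unique y with y^2 = z
  (in a finite field of characteristic 2 it always exists and is unique).\<close>
definition fsqrt :: "'a::field \<Rightarrow> 'a" where
  "fsqrt z = (THE y. y ^ 2 = z)"

definition roots_of_unity :: "nat \<Rightarrow> 'a::field set" where
  "roots_of_unity n = {x. x ^ n = 1}"

end

theory Submission
  imports Defs
begin

lemma card_kills:
  fixes a :: "'a::{comm_ring_1,finite}"
  shows "of_nat (card (UNIV::'a set)) * a = 0"
proof -
  have "(\<Sum>x\<in>UNIV. x + a) = (\<Sum>x\<in>UNIV. x)"
    by (rule sum.reindex_bij_witness[of _ "\<lambda>x. x - a" "\<lambda>x. x + a"]) auto
  moreover have "(\<Sum>x\<in>UNIV. x + a) = (\<Sum>x\<in>UNIV. x) + of_nat (card (UNIV::'a set)) * a"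
    by (simp add: sum.distrib)
  ultimately show ?thesis by simp
qed

lemma char2_frob:
  fixes a b :: "'a::field"
  assumes "(2::'a) = 0"
  shows "(a+b)^(2^k) = a^(2^k) + b^(2^k)"
proof (induction k)
  case 0 then show ?case by simp
next
  case (Suc k)
  have "(a+b)^(2^Suc k) = ((a+b)^(2^k))^2" by (simp add: power_mult[symmetric] mult.commute)
  also have "\<dots> = (a^(2^k))^2 + (b^(2^k))^2 + 2 * a^(2^k) * b^(2^k)" by (simp add: Suc power2_sum)
  also have "\<dots> = a^(2^Suc k) + b^(2^Suc k)" using assms by (simp add: power_mult[symmetric] mult.commute)
  finally show ?case .
qed

lemma char2_sq_inj:
  fixes a b :: "'a::field"
  assumes "(2::'a) = 0" "a^2 = b^2"
  shows "a = b"
proof -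
  have "(a-b)^2 = a^2 + b^2 - 2*a*b" by (simp add: power2_diff)
  also have "\<dots> = a^2 - b^2 + 2 * b^2 - 2*a*b" by simp
  also have "\<dots> = 0" using assms by simp
  finally show ?thesis by simp
qed

lemma char2_eq:
  fixes a b c :: "'a::field"
  assumes "(2::'a) = 0" "a - b = 2 * c"
  shows "a = b"
  using assms by simp

lemma char2_neg:
  fixes a :: "'a::field"
  assumes "(2::'a) = 0"
  shows "- a = a"
proof -
  have "a + a = 2 * a" by simp
  then have "a + a = 0" using assms by simp
  then show ?thesis by (simp add: add_eq_0_iff)
qed

lemma frac_combine:
  fixes w a b n d x :: "'a::field"
  assumes "b \<noteq> 0" "d \<noteq> 0"
  shows "w + (n/d + 1) * (a/b) * x + n/d = (w*b*d + (n + d)*a*x + n*b)/(b*d)"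
  using assms by (simp add: field_simps)

theorem lemma4p2:
  fixes m :: nat and x :: "'a::{field,finite}"
  defines "q \<equiv> (2::nat) ^ m"
  defines "r \<equiv> (2::nat) ^ ((m + 1) div 2)"
  defines "s \<equiv> q - r + 1"
  defines "t \<equiv> q + r + 1"
  assumes "odd m" and "m \<ge> 3"
  assumes "card (UNIV :: 'a set) = q ^ 4"
  assumes "x \<in> roots_of_unity s \<union> roots_of_unity t" and "x \<noteq> 1"
  defines "lam \<equiv> (x ^ (q - 1) + inverse (x ^ (q - 1))) ^ (q - 1)"
  shows "x ^ (q + 1) + fsqrt ((lam ^ r + 1) * lam) * x + lam ^ (2 ^ ((m - 1) div 2)) = 0"
proof -
  have two: "(2::'a) = 0"
  proof -
    have "of_nat (card (UNIV::'a set)) * (1::'a) = 0" by (rule card_kills)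
    then have "(2::'a) ^ (m * 4) = 0" using assms(7) unfolding q_def
      by (simp add: power_mult)
    then show ?thesis by simp
  qed
  have mm: "(m + 1) div 2 = Suc ((m - 1) div 2)" using assms(5,6) by presburger
  have r2: "r = 2 * 2 ^ ((m - 1) div 2)" unfolding r_def mm by simp
  have rr: "r * r = 2 * q"
  proof -
    have "r * r = 2 ^ ((m+1) div 2 + (m+1) div 2)" unfolding r_def by (simp add: power_add)
    also have "(m+1) div 2 + (m+1) div 2 = Suc m" using assms(5) by presburger
    finally show ?thesis unfolding q_def by simp
  qed
  have rq: "r \<le> q" unfolding r_def q_def by (rule power_increasing) (use assms(6) in auto)
  have sr: "s + r = q + 1" unfolding s_def using rq by simp
  have st: "s * t = q * q + 1"
  proof -
    have "int (s * t) = (int q + 1 - int r) * (int q + 1 + int r)"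
      unfolding s_def t_def using rq mult_le_mono[OF rq rq] by (simp add: of_nat_diff algebra_simps)
    also have "\<dots> = (int q + 1)^2 - int (r * r)" by (simp add: algebra_simps power2_eq_square)
    also have "\<dots> = int (q * q + 1)" unfolding rr by (simp add: algebra_simps power2_eq_square)
    finally show ?thesis by linarith
  qed
  have xs: "x ^ s = 1 \<or> x ^ t = 1" using assms(8) unfolding roots_of_unity_def by auto
  have x0: "x \<noteq> 0" using xs unfolding s_def t_def by auto
  have xqq: "x ^ (q * q) * x = 1"
  proof -
    have "x ^ (s * t) = 1" using xs by (metis power_mult power_one mult.commute)
    then show ?thesis unfolding st by (simp add: mult.commute)
  qed
  define X where "X = x ^ q"
  have X0: "X \<noteq> 0" unfolding X_def using x0 by simp
  have Xq: "X ^ q = inverse x" unfolding X_def using xqq x0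
    by (simp add: power_mult[symmetric] field_simps)
  have m1: "-(1::'a) = 1" by (rule char2_neg[OF two])
  have x1: "x + 1 \<noteq> 0"
  proof
    assume "x + 1 = 0"
    then have "x = - 1" by (simp add: eq_neg_iff_add_eq_0)
    then show False using m1 assms(9) by simp
  qed
  have xX: "x + X \<noteq> 0"
  proof
    assume h: "x + X = 0"
    then have "X = - x" by (simp add: eq_neg_iff_add_eq_0 add.commute)
    then have "X = x" using char2_neg[OF two] by simp
    then have "x * x = 1" using Xq x0 unfolding X_def by (simp add: field_simps)
    then have "(x + 1)^2 = 2 * x + 2" by (simp add: power2_eq_square algebra_simps)
    then have "(x+1)^2 = 0" using two by simp
    then show False using x1 by simp
  qed
  have qpos: "q > 0" unfolding q_def by simp
  define v where "v = X / x + x / X"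
  have xq1: "x ^ (q - 1) = X / x" unfolding X_def using x0 qpos
    by (simp add: field_simps power_eq_if[of x q] split: if_splits)
  have lamv: "lam = v ^ (q - 1)" unfolding lam_def v_def xq1 by simp
  have sq_add: "\<And>a b::'a. (a + b)^2 = a^2 + b^2"
    using char2_frob[OF two, of _ _ 1] by simp
  have v_eq: "v = (x + X)^2 / (x * X)" unfolding v_def sq_add using x0 X0
    by (simp add: field_simps power2_eq_square)
  have v0: "v \<noteq> 0" unfolding v_eq using x0 X0 xX by simp
  have vq: "v ^ q = (1 + x * X)^2 / (x * X)"
  proof -
    have "v ^ q = (X/x)^q + (x/X)^q" unfolding v_def q_def by (rule char2_frob[OF two])
    also have "\<dots> = inverse x / X + X / inverse x"
      by (simp add: power_divide Xq X_def[symmetric])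
    also have "\<dots> = (1 + x * X)^2 / (x * X)" unfolding sq_add using x0 X0
      by (simp add: field_simps power2_eq_square)
    finally show ?thesis .
  qed
  define \<mu> where "\<mu> = (1 + x * X) / (x + X)"
  have lam_mu: "lam = \<mu>^2"
  proof -
    have "lam * v = v ^ q" unfolding lamv using qpos
      by (metis Suc_diff_1 power_Suc2)
    also have "\<dots> = \<mu>^2 * v" unfolding vq unfolding v_eq \<mu>_def using xX x0 X0
      by (simp add: power_divide field_simps)
    finally show ?thesis using v0 by simp
  qed
  have fs: "fsqrt ((lam ^ r + 1) * lam) = (\<mu>^r + 1) * \<mu>"
  proof -
    have e: "((\<mu>^r + 1) * \<mu>)^2 = (lam ^ r + 1) * lam"
      unfolding lam_mu power_mult_distrib sq_add
      by (simp add: power_mult[symmetric] mult.commute)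
    show ?thesis unfolding fsqrt_def
      by (rule the_equality[where P = "\<lambda>y. y^2 = (lam ^ r + 1) * lam", OF e]) (use char2_sq_inj[OF two] e in metis)
  qed
  have lh: "lam ^ (2 ^ ((m - 1) div 2)) = \<mu> ^ r"
    unfolding lam_mu r2 by (simp add: power_mult)
  have mur: "\<mu> ^ r = (1 + x^r * X^r) / (x^r + X^r)"
    unfolding \<mu>_def power_divide r_def
    by (simp add: char2_frob[OF two] power_mult_distrib)
  have Xr: "X ^ r = (x ^ r) ^ q" unfolding X_def by (simp add: power_mult[symmetric] mult.commute)
  define M where "M = x * (X^2 + 1) / (X * (x^2 + 1))"
  have x21: "x^2 + 1 \<noteq> 0" using x1 sq_add[of x 1] by (metis power_one power_not_zero)
  have muM: "\<mu> ^ r = M"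
    using xs
  proof
    assume h: "x ^ s = 1"
    have "x ^ (q + 1) = x ^ r" using h by (metis sr power_add mult_1)
    then have a: "x ^ r = x * X" unfolding X_def by (simp add: mult.commute)
    have b: "X ^ r = X * inverse x" unfolding Xr a by (simp add: power_mult_distrib Xq flip: X_def)
    show ?thesis unfolding mur a b M_def using x0 X0 x21
      by (simp add: field_simps power2_eq_square)
  next
    assume h: "x ^ t = 1"
    have "x ^ (q + 1) * x ^ r = 1" using h unfolding t_def by (simp add: power_add mult.assoc)
    then have a: "x ^ r = inverse (x * X)" unfolding X_def
      using x0 by (simp add: field_simps mult.commute)
    have b: "X ^ r = x / X" unfolding Xr a using x0
      by (simp add: power_mult_distrib Xq X_def[symmetric] power_inverse field_simps)
    have n1: "X * (x^2 + 1) \<noteq> 0" "X * X * (x^2+1) \<noteq> 0" using X0 x21 by auto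
    show ?thesis unfolding mur a b M_def using x0 X0 x21 n1
      by (simp add: field_simps power2_eq_square)
  qed
  have P: "x*X*(x+X)*(X*(x^2+1)) + (x*(X^2+1) + X*(x^2+1))*(1+x*X)*x + x*(X^2+1)*(x+X) = 0"
    by (rule char2_eq[OF two, where c = "x*X + x*X^3 + x^2 + 2*x^2*X^2 + x^3*X + x^3*X^3 + x^4*X^2"])
       (simp add: algebra_simps power2_eq_square power3_eq_cube power4_eq_xxxx)
  have "x ^ (q + 1) + fsqrt ((lam ^ r + 1) * lam) * x + lam ^ (2 ^ ((m - 1) div 2))
      = x*X + (M + 1) * \<mu> * x + M" unfolding fs lh muM X_def by simp
  also have "\<dots> = (x*X*(x+X)*(X*(x^2+1)) + (x*(X^2+1) + X*(x^2+1))*(1+x*X)*x + x*(X^2+1)*(x+X))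
      / ((x+X)*(X*(x^2+1)))"
    unfolding M_def \<mu>_def using xX X0 x21 by (intro frac_combine) auto
  also have "\<dots> = 0" unfolding P by simp
  finally show ?thesis .
qed

end
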